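(* Let $\mathcal{X}$ be a finite nonempty set of types, $n=(n_x)_{x\in\mathcal{X}}$ nonnegative integers with $n_x$ even for every $x$, and $\Phi=(\Phi_{xy})_{x,y\in\mathcal{X}}$ a real matrix with $\Phi_{xy}=\Phi_{yx}$ for all $x,y$. Then a stable roommate matching exists.
   Context: Roommate matching with transferable utility: $n_x$ is the number of individuals of type $x$; a pair of types $\{x,y\}$ (possibly $x=y$) generates joint surplus $\Phi_{xy}$; singles get utility $0$. Feasible roommate matchings: $\mathcal{P}(n)=\{\mu=(\mu_{xy})_{x,y\in\mathcal{X}}:\ \mu_{xy}\in\mathbb{N},\ \mu_{xy}=\mu_{yx},\ 2\mu_{xx}+\sum_{y\neq x}\mu_{xy}\le n_x\ \forall x\}$. Total surplus $S_R(\mu;\Phi)=\sum_x\mu_{xx}\Phi_{xx}+\sum_{x\neq y}\mu_{xy}\Phi_{xy}/2$. An outcome is a pair $(\mu,u)$ with $\mu\in\mathcal{P}(n)$, $u\in\mathbb{R}^{\mathcal{X}}$ and $\sum_x n_xu_x=S_R(\mu;\Phi)$; it is stable if $u_x\ge0$ and $u_x+u_y\ge\Phi_{xy}$ for all $x,y\in\mathcal{X}$. A matching $\mu$ is a stable roommate matching if some $u$ makes $(\mu,u)$ a stable outcome. *)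

theory Defs
  imports Complex_Main
begin

definition feasible_roommate :: "('x::finite \<Rightarrow> nat) \<Rightarrow> ('x \<Rightarrow> 'x \<Rightarrow> nat) \<Rightarrow> bool" where
  "feasible_roommate n mu \<longleftrightarrow>
     (\<forall>x y. mu x y = mu y x) \<and>
     (\<forall>x. 2 * mu x x + (\<Sum>y\<in>UNIV - {x}. mu x y) \<le> n x)"

definition total_surplus_R :: "('x::finite \<Rightarrow> 'x \<Rightarrow> nat) \<Rightarrow> ('x \<Rightarrow> 'x \<Rightarrow> real) \<Rightarrow> real" where
  "total_surplus_R mu Phi =
     (\<Sum>x\<in>UNIV. real (mu x x) * Phi x x) +
     (\<Sum>x\<in>UNIV. \<Sum>y\<in>UNIV - {x}. real (mu x y) * Phi x y / 2)"

definition stable_outcome_R ::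
  "('x::finite \<Rightarrow> nat) \<Rightarrow> ('x \<Rightarrow> 'x \<Rightarrow> real) \<Rightarrow> ('x \<Rightarrow> 'x \<Rightarrow> nat) \<Rightarrow> ('x \<Rightarrow> real) \<Rightarrow> bool" where
  "stable_outcome_R n Phi mu u \<longleftrightarrow>
     feasible_roommate n mu \<and>
     (\<Sum>x\<in>UNIV. real (n x) * u x) = total_surplus_R mu Phi \<and>
     (\<forall>x. 0 \<le> u x) \<and>
     (\<forall>x y. Phi x y \<le> u x + u y)"

definition stable_roommate_matching ::
  "('x::finite \<Rightarrow> nat) \<Rightarrow> ('x \<Rightarrow> 'x \<Rightarrow> real) \<Rightarrow> ('x \<Rightarrow> 'x \<Rightarrow> nat) \<Rightarrow> bool" where
  "stable_roommate_matching n Phi mu \<longleftrightarrow> (\<exists>u. stable_outcome_R n Phi mu u)"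

end

theory Submission
  imports Defs
begin

fun walk :: "('n \<Rightarrow> 'n \<Rightarrow> bool) \<Rightarrow> 'n list \<Rightarrow> bool" where
  "walk E (a # b # cs) = (E a b \<and> walk E (b # cs))"
| "walk E _ = True"

fun pw :: "('n \<Rightarrow> 'n \<Rightarrow> real) \<Rightarrow> 'n list \<Rightarrow> real" where
  "pw w (a # b # cs) = w a b + pw w (b # cs)"
| "pw w _ = 0"

lemma walk_append: "walk E (xs @ y # ys) = (walk E (xs @ [y]) \<and> walk E (y # ys))"
proof (induction xs)
  case (Cons a xs) then show ?case by (cases xs) auto
qed simp

lemma pw_append: "pw w (xs @ y # ys) = pw w (xs @ [y]) + pw w (y # ys)"
proof (induction xs)
  case (Cons a xs) then show ?case by (cases xs) auto
qed simp

lemma walk_nth: "walk E cs \<Longrightarrow> Suc i < length cs \<Longrightarrow> E (cs!i) (cs!Suc i)"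
proof (induction E cs arbitrary: i rule: walk.induct)
  case (1 E a b cs)
  then show ?case by (cases i) auto
qed auto

lemma pw_nth: "pw w cs = (\<Sum>i < length cs - 1. w (cs!i) (cs!Suc i))"
proof (induction w cs rule: pw.induct)
  case (1 w a b cs)
  then show ?case by (simp add: sum.lessThan_Suc_shift del: sum.lessThan_Suc)
qed auto

lemma cycle_le:
  fixes E :: "'n \<Rightarrow> 'n \<Rightarrow> bool" and w :: "'n \<Rightarrow> 'n \<Rightarrow> real"
  assumes cyc: "\<And>S \<sigma>. finite S \<Longrightarrow> \<sigma> ` S \<subseteq> S \<Longrightarrow> inj_on \<sigma> S \<Longrightarrow> (\<forall>a\<in>S. E a (\<sigma> a)) \<Longrightarrow> (\<Sum>a\<in>S. w a (\<sigma> a)) \<le> 0"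
    and ds: "distinct ds" "ds \<noteq> []" "walk E ds" "E (last ds) (hd ds)"
  shows "pw w ds + w (last ds) (hd ds) \<le> 0"
proof -
  define L where "L = length ds"
  obtain k where Lk: "L = Suc k" using ds(2) unfolding L_def by (cases ds) auto
  define \<sigma> where "\<sigma> a = ds ! (Suc (THE i. i < L \<and> ds!i = a) mod L)" for a
  have sig: "\<sigma> (ds!i) = ds ! (Suc i mod L)" if "i < L" for i
  proof -
    have "(THE j. j < L \<and> ds!j = ds!i) = i"
      using that ds(1) unfolding L_def by (auto simp: nth_eq_iff_index_eq)
    then show ?thesis unfolding \<sigma>_def by simp
  qed
  have setds: "set ds = (!) ds ` {..<L}" unfolding L_def by (auto simp: set_conv_nth)
  have inj: "inj_on ((!) ds) {..<L}" using ds(1) unfolding L_def by (simp add: inj_on_nth)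
  have modL: "Suc i mod L = (if i = k then 0 else Suc i)" if "i < L" for i
    using that Lk by auto
  have "(\<Sum>a\<in>set ds. w a (\<sigma> a)) \<le> 0"
  proof (rule cyc)
    show "\<sigma> ` set ds \<subseteq> set ds"
      using setds sig Lk by (auto simp: modL)
    show "inj_on \<sigma> (set ds)"
    proof (rule inj_onI)
      fix a b assume "a \<in> set ds" "b \<in> set ds" "\<sigma> a = \<sigma> b"
      then obtain i j where ij: "i < L" "j < L" "a = ds!i" "b = ds!j" "ds ! (Suc i mod L) = ds ! (Suc j mod L)"
        using setds sig by auto
      then have "Suc i mod L = Suc j mod L"
        using ds(1) Lk unfolding L_def by (simp add: nth_eq_iff_index_eq)
      then have "i = j" using ij(1,2) modL by (auto split: if_splits)
      then show "a = b" using ij by simp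
    qed
    show "\<forall>a\<in>set ds. E a (\<sigma> a)"
    proof
      fix a assume "a \<in> set ds"
      then obtain i where i: "i < L" "a = ds!i" using setds by auto
      show "E a (\<sigma> a)"
      proof (cases "i = k")
        case True
        then show ?thesis using i ds(2,4) Lk sig[OF i(1)] unfolding L_def
          by (simp add: last_conv_nth hd_conv_nth)
      next
        case False
        then show ?thesis using i ds(3) Lk sig[OF i(1)] walk_nth[of E ds i] unfolding L_def
          by simp
      qed
    qed
  qed simp
  moreover have "(\<Sum>a\<in>set ds. w a (\<sigma> a)) = (\<Sum>i<L. w (ds!i) (ds ! (Suc i mod L)))"
    unfolding setds by (simp add: sum.reindex[OF inj] sig)
  moreover have "\<dots> = (\<Sum>i<k. w (ds!i) (ds ! Suc i)) + w (ds!k) (ds!0)"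
  proof -
    have "(\<Sum>i<L. w (ds!i) (ds ! (Suc i mod L))) = (\<Sum>i<k. w (ds!i) (ds ! (Suc i mod L))) + w (ds!k) (ds!(Suc k mod L))"
      using Lk by simp
    moreover have "(\<Sum>i<k. w (ds!i) (ds ! (Suc i mod L))) = (\<Sum>i<k. w (ds!i) (ds!Suc i))"
      by (rule sum.cong) (auto simp: Lk)
    ultimately show ?thesis using Lk by simp
  qed
  moreover have "pw w ds = (\<Sum>i<k. w (ds!i) (ds ! Suc i))"
    using Lk unfolding pw_nth L_def by simp
  moreover have "last ds = ds!k" "hd ds = ds!0" using ds(2) Lk unfolding L_def
    by (auto simp: last_conv_nth hd_conv_nth)
  ultimately show ?thesis by simp
qed

lemma potentials:
  fixes E :: "'n::finite \<Rightarrow> 'n \<Rightarrow> bool" and w :: "'n \<Rightarrow> 'n \<Rightarrow> real"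
  assumes cyc: "\<And>S \<sigma>. finite S \<Longrightarrow> \<sigma> ` S \<subseteq> S \<Longrightarrow> inj_on \<sigma> S \<Longrightarrow> (\<forall>a\<in>S. E a (\<sigma> a)) \<Longrightarrow> (\<Sum>a\<in>S. w a (\<sigma> a)) \<le> 0"
  shows "\<exists>p. \<forall>a b. E a b \<longrightarrow> p a + w a b \<le> p b"
proof -
  define P where "P = {cs. distinct cs \<and> cs \<noteq> [] \<and> walk E cs}"
  have finP: "finite P"
    by (rule finite_subset[OF _ finite_subset_distinct[of "UNIV::'n set"]]) (auto simp: P_def)
  define p where "p b = Max (pw w ` {cs \<in> P. last cs = b})" for b
  have fin: "finite (pw w ` {cs \<in> P. last cs = b})" for b using finP by simp
  have ge: "pw w cs \<le> p b" if "cs \<in> P" "last cs = b" for cs b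
    unfolding p_def using that fin by (intro Max_ge) auto
  have ne: "[b] \<in> P" for b by (simp add: P_def)
  have ex: "\<exists>cs\<in>P. last cs = b \<and> pw w cs = p b" for b
  proof -
    have "p b \<in> pw w ` {cs \<in> P. last cs = b}"
      unfolding p_def using fin ne by (intro Max_in) force+
    then show ?thesis by force
  qed
  have "p a + w a b \<le> p b" if "E a b" for a b
  proof -
    obtain cs where cs: "cs \<in> P" "last cs = a" "pw w cs = p a" using ex by blast
    have cs_eq: "cs = butlast cs @ [a]" using cs unfolding P_def by auto
    show ?thesis
    proof (cases "b \<in> set cs")
      case False
      have eq2: "cs @ [b] = butlast cs @ a # [b]" using cs_eq by (metis append.assoc append_Cons append_Nil)
      have "walk E (butlast cs @ a # [b])"
        using walk_append[of E "butlast cs" a "[b]"] cs cs_eq that unfolding P_def by auto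
      then have "walk E (cs @ [b])" by (subst eq2)
      then have "cs @ [b] \<in> P" using cs False unfolding P_def by simp
      moreover have "pw w (cs @ [b]) = pw w cs + w a b"
        using pw_append[of w "butlast cs" a "[b]"] cs_eq by (subst eq2) simp
      ultimately show ?thesis using ge[of "cs @ [b]" b] cs by simp
    next
      case True
      then obtain xs ys where xy: "cs = xs @ b # ys" by (meson split_list)
      have wk: "walk E (xs @ [b])" "walk E (b # ys)"
        using cs xy walk_append[of E xs b ys] unfolding P_def by auto
      have "pw w (b # ys) + w (last (b # ys)) (hd (b # ys)) \<le> 0"
        apply (rule cycle_le[where E=E and w=w, OF cyc])
        using cs xy wk that by (auto simp: P_def)
      moreover have "last (b # ys) = a" using cs xy by (metis last_appendR list.distinct(1))
      moreover have "pw w cs = pw w (xs @ [b]) + pw w (b # ys)" using xy pw_append by metis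
      moreover have "pw w (xs @ [b]) \<le> p b"
        using ge[of "xs @ [b]" b] cs xy wk unfolding P_def by auto
      ultimately show ?thesis using cs by simp
    qed
  qed
  then show ?thesis by blast
qed


datatype 'x node = Z | L 'x | R 'x

lemma UNIV_node: "(UNIV :: 'x node set) = insert Z (range L \<union> range R)"
proof -
  have "a \<in> insert Z (range L \<union> range R)" for a :: "'x node"
    by (cases a) auto
  then show ?thesis by blast
qed

instance node :: (finite) finite
proof
  show "finite (UNIV :: 'a node set)" by (subst UNIV_node) simp
qed

lemma sum_node: "(\<Sum>a\<in>(UNIV::'x::finite node set). g a) = g Z + (\<Sum>x\<in>UNIV. g (L x)) + (\<Sum>x\<in>UNIV. g (R x))"
proof -
  have "(\<Sum>a\<in>(UNIV::'x node set). g a) = g Z + sum g (range L \<union> range R)"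
    by (subst UNIV_node) (subst sum.insert, auto)
  also have "sum g (range L \<union> range R) = sum g (range L) + sum g (range R)"
    by (rule sum.union_disjoint) auto
  also have "sum g (range L) = (\<Sum>x\<in>UNIV. g (L x))"
    by (subst sum.reindex) (auto simp: inj_on_def)
  also have "sum g (range R) = (\<Sum>x\<in>UNIV. g (R x))"
    by (subst sum.reindex) (auto simp: inj_on_def)
  finally show ?thesis by (simp add: add.assoc)
qed

definition bfeas :: "('x::finite \<Rightarrow> nat) \<Rightarrow> ('x \<Rightarrow> 'x \<Rightarrow> nat) \<Rightarrow> bool" where
  "bfeas m \<nu> \<longleftrightarrow> (\<forall>x. (\<Sum>y\<in>UNIV. \<nu> x y) \<le> m x) \<and> (\<forall>y. (\<Sum>x\<in>UNIV. \<nu> x y) \<le> m y)"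

definition FF :: "('x::finite \<Rightarrow> 'x \<Rightarrow> nat) \<Rightarrow> ('x \<Rightarrow> 'x \<Rightarrow> real) \<Rightarrow> real" where
  "FF \<nu> Phi = (\<Sum>x\<in>UNIV. \<Sum>y\<in>UNIV. real (\<nu> x y) * Phi x y)"

fun resE :: "('x::finite \<Rightarrow> nat) \<Rightarrow> ('x \<Rightarrow> 'x \<Rightarrow> nat) \<Rightarrow> 'x node \<Rightarrow> 'x node \<Rightarrow> bool" where
  "resE m \<nu> (R y) (L x) = True"
| "resE m \<nu> (L x) (R y) = (0 < \<nu> x y)"
| "resE m \<nu> Z (L x) = True"
| "resE m \<nu> (L x) Z = ((\<Sum>y\<in>UNIV. \<nu> x y) < m x)"
| "resE m \<nu> (R y) Z = True"
| "resE m \<nu> Z (R y) = ((\<Sum>x\<in>UNIV. \<nu> x y) < m y)"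
| "resE m \<nu> _ _ = False"

fun resw :: "('x \<Rightarrow> 'x \<Rightarrow> real) \<Rightarrow> 'x node \<Rightarrow> 'x node \<Rightarrow> real" where
  "resw Phi (R y) (L x) = Phi x y"
| "resw Phi (L x) (R y) = - Phi x y"
| "resw Phi _ _ = 0"

lemma resw_L: "resw Phi (L x) c = (\<Sum>y\<in>(UNIV::'x::finite set). if c = R y then - Phi x y else 0)"
  by (cases c) auto

lemma resw_R: "resw Phi (R y) c = (\<Sum>x\<in>(UNIV::'x::finite set). if c = L x then Phi x y else 0)"
  by (cases c) auto

lemma no_pos_cycle:
  fixes m :: "'x::finite \<Rightarrow> nat" and Phi :: "'x \<Rightarrow> 'x \<Rightarrow> real"
  assumes opt: "\<And>\<nu>'. bfeas m \<nu>' \<Longrightarrow> FF \<nu>' Phi \<le> FF \<nu> Phi" and feas: "bfeas m \<nu>"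
    and S: "\<sigma> ` S \<subseteq> S" "inj_on \<sigma> S" "\<forall>a\<in>S. resE m \<nu> a (\<sigma> a)"
  shows "(\<Sum>a\<in>S. resw Phi a (\<sigma> a)) \<le> 0"
proof (rule ccontr)
  assume pos: "\<not> (\<Sum>a\<in>S. resw Phi a (\<sigma> a)) \<le> 0"
  define inc where "inc x y \<longleftrightarrow> R y \<in> S \<and> \<sigma> (R y) = L x" for x y
  define dec where "dec x y \<longleftrightarrow> L x \<in> S \<and> \<sigma> (L x) = R y" for x y
  define \<nu>' where "\<nu>' x y = \<nu> x y + of_bool (inc x y) - of_bool (dec x y)" for x y
  have decpos: "0 < \<nu> x y" if "dec x y" for x y
    using S(3) that unfolding dec_def by force
  have rnu: "real (\<nu>' x y) = real (\<nu> x y) + of_bool (inc x y) - of_bool (dec x y)" for x y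
    using decpos[of x y] unfolding \<nu>'_def by (cases "inc x y"; cases "dec x y") auto
  have finS: "finite S" by simp
  have surj: "\<sigma> ` S = S" using endo_inj_surj[OF finS S(1) S(2)] .
  have sumS: "(\<Sum>a\<in>S. resw Phi a (\<sigma> a)) =
      (\<Sum>x\<in>UNIV. \<Sum>y\<in>UNIV. of_bool (inc x y) * Phi x y) - (\<Sum>x\<in>UNIV. \<Sum>y\<in>UNIV. of_bool (dec x y) * Phi x y)"
  proof -
    have "(\<Sum>a\<in>S. resw Phi a (\<sigma> a)) = (\<Sum>a\<in>UNIV. if a \<in> S then resw Phi a (\<sigma> a) else 0)"
      using sum.inter_restrict[of UNIV "\<lambda>a. resw Phi a (\<sigma> a)" S] by simp
    also have "\<dots> = (\<Sum>x\<in>UNIV. if L x \<in> S then resw Phi (L x) (\<sigma> (L x)) else 0)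
        + (\<Sum>y\<in>UNIV. if R y \<in> S then resw Phi (R y) (\<sigma> (R y)) else 0)"
      by (subst sum_node) simp
    also have "(\<Sum>x\<in>UNIV. if L x \<in> S then resw Phi (L x) (\<sigma> (L x)) else 0)
        = - (\<Sum>x\<in>UNIV. \<Sum>y\<in>UNIV. of_bool (dec x y) * Phi x y)"
    proof -
      have "(\<Sum>x\<in>UNIV. if L x \<in> S then resw Phi (L x) (\<sigma> (L x)) else 0)
          = (\<Sum>x\<in>UNIV. - (\<Sum>y\<in>UNIV. of_bool (dec x y) * Phi x y))"
      proof (rule sum.cong[OF refl])
        fix x
        show "(if L x \<in> S then resw Phi (L x) (\<sigma> (L x)) else 0) = - (\<Sum>y\<in>UNIV. of_bool (dec x y) * Phi x y)"
        proof (cases "L x \<in> S")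
          case True
          have "(\<Sum>y\<in>UNIV. if \<sigma> (L x) = R y then - Phi x y else 0) = (\<Sum>y\<in>UNIV. - (of_bool (dec x y) * Phi x y))"
            by (rule sum.cong) (auto simp: dec_def True)
          then show ?thesis using True by (simp add: resw_L sum_negf)
        qed (simp add: dec_def)
      qed
      then show ?thesis by (simp add: sum_negf)
    qed
    also have "(\<Sum>y\<in>UNIV. if R y \<in> S then resw Phi (R y) (\<sigma> (R y)) else 0)
        = (\<Sum>y\<in>UNIV. \<Sum>x\<in>UNIV. of_bool (inc x y) * Phi x y)"
    proof (rule sum.cong[OF refl])
      fix y
      show "(if R y \<in> S then resw Phi (R y) (\<sigma> (R y)) else 0) = (\<Sum>x\<in>UNIV. of_bool (inc x y) * Phi x y)"
      proof (cases "R y \<in> S")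
        case True
        have "(\<Sum>x\<in>UNIV. if \<sigma> (R y) = L x then Phi x y else 0) = (\<Sum>x\<in>UNIV. of_bool (inc x y) * Phi x y)"
          by (rule sum.cong) (auto simp: inc_def True)
        then show ?thesis using True by (simp add: resw_R)
      qed (simp add: inc_def)
    qed
    also have "\<dots> = (\<Sum>x\<in>UNIV. \<Sum>y\<in>UNIV. of_bool (inc x y) * Phi x y)"
      by (rule sum.swap)
    finally show ?thesis by simp
  qed
  have "FF \<nu>' Phi = (\<Sum>x\<in>UNIV. \<Sum>y\<in>UNIV. real (\<nu> x y) * Phi x y + of_bool (inc x y) * Phi x y - of_bool (dec x y) * Phi x y)"
    unfolding FF_def by (intro sum.cong refl) (simp add: rnu left_diff_distrib distrib_right)
  also have "\<dots> = FF \<nu> Phi + (\<Sum>a\<in>S. resw Phi a (\<sigma> a))"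
    unfolding sumS FF_def by (simp only: sum.distrib sum_subtractf)
  finally have "FF \<nu>' Phi = FF \<nu> Phi + (\<Sum>a\<in>S. resw Phi a (\<sigma> a))" .
  with pos have gt: "FF \<nu>' Phi > FF \<nu> Phi" by simp
  have rows: "(\<Sum>y\<in>UNIV. \<nu>' x y) \<le> m x" for x
  proof -
    have r: "real (\<Sum>y\<in>UNIV. \<nu>' x y) = real (\<Sum>y\<in>UNIV. \<nu> x y) + (\<Sum>y\<in>UNIV. of_bool (inc x y)) - (\<Sum>y\<in>UNIV. of_bool (dec x y))"
      by (simp add: rnu sum.distrib sum_subtractf)
    have "(\<Sum>y\<in>UNIV. \<nu> x y) \<le> m x" using feas unfolding bfeas_def by blast
    then have m0: "real (\<Sum>y\<in>UNIV. \<nu> x y) \<le> real (m x)" by (simp only: of_nat_le_iff)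
    have dn: "(\<Sum>y\<in>UNIV. of_bool (dec x y) :: real) \<ge> 0" by (simp add: sum_nonneg)
    have "real (\<Sum>y\<in>UNIV. \<nu>' x y) \<le> real (m x)"
    proof (cases "\<exists>y0. inc x y0")
      case False
      then show ?thesis using r m0 dn by simp
    next
      case True
      then obtain y0 where y0: "inc x y0" by blast
      have "(\<Sum>y\<in>UNIV. of_bool (inc x y) :: real) = (\<Sum>y\<in>UNIV. if y = y0 then 1 else 0)"
      proof (rule sum.cong)
        fix y show "(of_bool (inc x y) :: real) = (if y = y0 then 1 else 0)"
        proof (cases "inc x y")
          case True
          then have "R y = R y0" using y0 S(2) unfolding inc_def inj_on_def by metis
          then show ?thesis using True by simp
        qed (use y0 in auto)
      qed simp
      then have inc1: "(\<Sum>y\<in>UNIV. of_bool (inc x y) :: real) = 1" by simp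
      have LS: "L x \<in> S" using y0 S(1) unfolding inc_def by force
      then have e: "resE m \<nu> (L x) (\<sigma> (L x))" using S(3) by blast
      show ?thesis
      proof (cases "\<sigma> (L x)")
        case Z
        then have "(\<Sum>y\<in>UNIV. \<nu> x y) < m x" using e by simp
        then show ?thesis using r inc1 dn by linarith
      next
        case (L x')
        then show ?thesis using e by simp
      next
        case (R y1)
        then have "dec x y1" using LS unfolding dec_def by simp
        then have "(\<Sum>y\<in>UNIV. of_bool (dec x y) :: real) \<ge> 1"
          using member_le_sum[of y1 UNIV "\<lambda>y. of_bool (dec x y) :: real"] by simp
        then show ?thesis using r inc1 m0 by linarith
      qed
    qed
    then show ?thesis by linarith
  qed
  have cols: "(\<Sum>x\<in>UNIV. \<nu>' x y) \<le> m y" for y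
  proof -
    have r: "real (\<Sum>x\<in>UNIV. \<nu>' x y) = real (\<Sum>x\<in>UNIV. \<nu> x y) + (\<Sum>x\<in>UNIV. of_bool (inc x y)) - (\<Sum>x\<in>UNIV. of_bool (dec x y))"
      by (simp add: rnu sum.distrib sum_subtractf)
    have "(\<Sum>x\<in>UNIV. \<nu> x y) \<le> m y" using feas unfolding bfeas_def by blast
    then have m0: "real (\<Sum>x\<in>UNIV. \<nu> x y) \<le> real (m y)" by (simp only: of_nat_le_iff)
    have dn: "(\<Sum>x\<in>UNIV. of_bool (dec x y) :: real) \<ge> 0" by (simp add: sum_nonneg)
    have "real (\<Sum>x\<in>UNIV. \<nu>' x y) \<le> real (m y)"
    proof (cases "\<exists>x0. inc x0 y")
      case False
      then show ?thesis using r m0 dn by simp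
    next
      case True
      then obtain x0 where x0: "inc x0 y" by blast
      have "(\<Sum>x\<in>UNIV. of_bool (inc x y) :: real) = (\<Sum>x\<in>UNIV. if x = x0 then 1 else 0)"
        by (rule sum.cong) (use x0 in \<open>auto simp: inc_def\<close>)
      then have inc1: "(\<Sum>x\<in>UNIV. of_bool (inc x y) :: real) = 1" by simp
      have RS: "R y \<in> S" using x0 unfolding inc_def by simp
      then obtain a where a: "a \<in> S" "\<sigma> a = R y" using surj by (metis imageE)
      then have e: "resE m \<nu> a (R y)" using S(3) by force
      show ?thesis
      proof (cases a)
        case Z
        then have "(\<Sum>x\<in>UNIV. \<nu> x y) < m y" using e by simp
        then show ?thesis using r inc1 dn by linarith
      next
        case (R y')
        then show ?thesis using e by simp
      next
        case (L x1)
        then have "dec x1 y" using a unfolding dec_def by simp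
        then have "(\<Sum>x\<in>UNIV. of_bool (dec x y) :: real) \<ge> 1"
          using member_le_sum[of x1 UNIV "\<lambda>x. of_bool (dec x y) :: real"] by simp
        then show ?thesis using r inc1 m0 by linarith
      qed
    qed
    then show ?thesis by linarith
  qed
  have "bfeas m \<nu>'" unfolding bfeas_def using rows cols by blast
  then show False using opt gt by fastforce
qed


lemma bip_dual:
  fixes m :: "'x::finite \<Rightarrow> nat" and Phi :: "'x \<Rightarrow> 'x \<Rightarrow> real"
  shows "\<exists>\<nu> u v. bfeas m \<nu> \<and> (\<forall>x. 0 \<le> u x) \<and> (\<forall>y. 0 \<le> v y) \<and> (\<forall>x y. Phi x y \<le> u x + v y)
     \<and> FF \<nu> Phi = (\<Sum>x\<in>UNIV. real (m x) * (u x + v x))"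
proof -
  define K where "K = (\<Sum>x\<in>UNIV. m x)"
  define B where "B = {\<nu>. bfeas m \<nu>}"
  have finG: "finite {g :: 'x \<Rightarrow> nat. \<forall>y. g y \<in> {..K}}"
    using finite_set_of_finite_funs[of "UNIV :: 'x set" "{..K}"] by simp
  have finF: "finite {\<nu> :: 'x \<Rightarrow> 'x \<Rightarrow> nat. \<forall>x. \<nu> x \<in> {g. \<forall>y. g y \<in> {..K}}}"
    using finite_set_of_finite_funs[OF _ finG, of "UNIV :: 'x set"] by simp
  have "B \<subseteq> {\<nu> :: 'x \<Rightarrow> 'x \<Rightarrow> nat. \<forall>x. \<nu> x \<in> {g. \<forall>y. g y \<in> {..K}}}"
  proof (clarsimp simp: B_def)
    fix \<nu> x y assume f: "bfeas m \<nu>"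
    have "\<nu> x y \<le> (\<Sum>y\<in>UNIV. \<nu> x y)" by (rule member_le_sum) auto
    also have "\<dots> \<le> m x" using f unfolding bfeas_def by blast
    also have "m x \<le> K" unfolding K_def by (rule member_le_sum) auto
    finally show "\<nu> x y \<le> K" .
  qed
  then have finB: "finite B" using finF finite_subset by blast
  have zB: "(\<lambda>_ _. 0) \<in> B" by (simp add: B_def bfeas_def)
  define M where "M = Max ((\<lambda>\<nu>. FF \<nu> Phi) ` B)"
  have "M \<in> (\<lambda>\<nu>. FF \<nu> Phi) ` B" unfolding M_def using finB zB by (intro Max_in) auto
  then obtain \<nu> where \<nu>: "\<nu> \<in> B" "FF \<nu> Phi = M" by blast
  have opt: "FF \<nu>' Phi \<le> FF \<nu> Phi" if "bfeas m \<nu>'" for \<nu>'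
    unfolding \<nu>(2) M_def using finB that by (intro Max_ge) (auto simp: B_def)
  have feas: "bfeas m \<nu>" using \<nu> by (simp add: B_def)
  have "\<exists>p. \<forall>a b. resE m \<nu> a b \<longrightarrow> p a + resw Phi a b \<le> p b"
    by (rule potentials) (rule no_pos_cycle[OF opt feas], auto)
  then obtain p where p: "\<And>a b. resE m \<nu> a b \<Longrightarrow> p a + resw Phi a b \<le> p b" by blast
  define u where "u x = p (L x) - p Z" for x
  define v where "v y = p Z - p (R y)" for y
  have h1: "Phi x y \<le> u x + v y" for x y using p[of "R y" "L x"] by (simp add: u_def v_def)
  have h2: "u x + v y \<le> Phi x y" if "0 < \<nu> x y" for x y using p[of "L x" "R y"] that by (simp add: u_def v_def)
  have h3: "0 \<le> u x" for x using p[of Z "L x"] by (simp add: u_def)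
  have h4: "u x \<le> 0" if "(\<Sum>y\<in>UNIV. \<nu> x y) < m x" for x using p[of "L x" Z] that by (simp add: u_def)
  have h5: "0 \<le> v y" for y using p[of "R y" Z] by (simp add: v_def)
  have h6: "v y \<le> 0" if "(\<Sum>x\<in>UNIV. \<nu> x y) < m y" for y using p[of Z "R y"] that by (simp add: v_def)
  have "FF \<nu> Phi = (\<Sum>x\<in>UNIV. \<Sum>y\<in>UNIV. real (\<nu> x y) * (u x + v y))"
    unfolding FF_def
  proof (intro sum.cong refl)
    fix x y
    show "real (\<nu> x y) * Phi x y = real (\<nu> x y) * (u x + v y)"
    proof (cases "\<nu> x y = 0")
      case False
      then have "Phi x y = u x + v y" using h1[of x y] h2[of x y] by simp
      then show ?thesis by simp
    qed simp
  qed
  also have "\<dots> = (\<Sum>x\<in>UNIV. u x * real (\<Sum>y\<in>UNIV. \<nu> x y)) + (\<Sum>y\<in>UNIV. v y * real (\<Sum>x\<in>UNIV. \<nu> x y))"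
  proof -
    have "(\<Sum>x\<in>UNIV. \<Sum>y\<in>UNIV. real (\<nu> x y) * (u x + v y))
        = (\<Sum>x\<in>UNIV. \<Sum>y\<in>UNIV. u x * real (\<nu> x y)) + (\<Sum>x\<in>UNIV. \<Sum>y\<in>UNIV. v y * real (\<nu> x y))"
      by (simp add: sum.distrib algebra_simps)
    also have "(\<Sum>x\<in>UNIV. \<Sum>y\<in>UNIV. v y * real (\<nu> x y)) = (\<Sum>y\<in>UNIV. \<Sum>x\<in>UNIV. v y * real (\<nu> x y))"
      by (rule sum.swap)
    finally show ?thesis by (simp add: sum_distrib_left)
  qed
  also have "(\<Sum>x\<in>UNIV. u x * real (\<Sum>y\<in>UNIV. \<nu> x y)) = (\<Sum>x\<in>UNIV. u x * real (m x))"
  proof (intro sum.cong refl)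
    fix x
    have "(\<Sum>y\<in>UNIV. \<nu> x y) \<le> m x" using feas unfolding bfeas_def by blast
    then show "u x * real (\<Sum>y\<in>UNIV. \<nu> x y) = u x * real (m x)"
    proof (cases "(\<Sum>y\<in>UNIV. \<nu> x y) < m x")
      case True
      then have "u x = 0" using h3[of x] h4[of x] by linarith
      then show ?thesis by simp
    next
      case False
      then have "(\<Sum>y\<in>UNIV. \<nu> x y) = m x" using \<open>(\<Sum>y\<in>UNIV. \<nu> x y) \<le> m x\<close> by linarith
      then show ?thesis by (simp only:)
    qed
  qed
  also have "(\<Sum>y\<in>UNIV. v y * real (\<Sum>x\<in>UNIV. \<nu> x y)) = (\<Sum>y\<in>UNIV. v y * real (m y))"
  proof (intro sum.cong refl)
    fix y
    have "(\<Sum>x\<in>UNIV. \<nu> x y) \<le> m y" using feas unfolding bfeas_def by blast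
    then show "v y * real (\<Sum>x\<in>UNIV. \<nu> x y) = v y * real (m y)"
    proof (cases "(\<Sum>x\<in>UNIV. \<nu> x y) < m y")
      case True
      then have "v y = 0" using h5[of y] h6[of y] by linarith
      then show ?thesis by simp
    next
      case False
      then have "(\<Sum>x\<in>UNIV. \<nu> x y) = m y" using \<open>(\<Sum>x\<in>UNIV. \<nu> x y) \<le> m y\<close> by linarith
      then show ?thesis by (simp only:)
    qed
  qed
  finally have "FF \<nu> Phi = (\<Sum>x\<in>UNIV. real (m x) * (u x + v x))"
    by (simp add: sum.distrib algebra_simps)
  then show ?thesis using feas h1 h3 h5 by blast
qed

theorem corollary1:
  fixes n :: "'x::finite \<Rightarrow> nat" and Phi :: "'x \<Rightarrow> 'x \<Rightarrow> real"
  assumes "\<forall>x. even (n x)"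
    and "\<forall>x y. Phi x y = Phi y x"
  shows "\<exists>mu. stable_roommate_matching n Phi mu"
proof -
  define m where "m x = n x div 2" for x
  have nm: "n x = 2 * m x" for x using assms(1) unfolding m_def by auto
  obtain \<nu> u v where d: "bfeas m \<nu>" "\<forall>x. 0 \<le> u x" "\<forall>y. 0 \<le> v y" "\<forall>x y. Phi x y \<le> u x + v y"
     "FF \<nu> Phi = (\<Sum>x\<in>UNIV. real (m x) * (u x + v x))"
    using bip_dual[of m Phi] by blast
  define mu where "mu x y = (if x = y then \<nu> x x else \<nu> x y + \<nu> y x)" for x y
  define uR where "uR x = (u x + v x) / 2" for x
  have feas: "feasible_roommate n mu"
    unfolding feasible_roommate_def
  proof (intro conjI allI)
    fix x y show "mu x y = mu y x" by (simp add: mu_def)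
  next
    fix x
    have "(\<Sum>y\<in>UNIV - {x}. mu x y) = (\<Sum>y\<in>UNIV - {x}. \<nu> x y + \<nu> y x)"
      by (rule sum.cong) (auto simp: mu_def)
    moreover have "(\<Sum>y\<in>UNIV. \<nu> x y + \<nu> y x) = (\<nu> x x + \<nu> x x) + (\<Sum>y\<in>UNIV - {x}. \<nu> x y + \<nu> y x)"
      by (subst sum.remove[of UNIV x]) auto
    moreover have "(\<Sum>y\<in>UNIV. \<nu> x y + \<nu> y x) \<le> n x"
      using d(1) unfolding bfeas_def nm sum.distrib by (metis add_le_mono mult_2)
    ultimately show "2 * mu x x + (\<Sum>y\<in>UNIV - {x}. mu x y) \<le> n x"
      by (simp add: mu_def)
  qed
  have surplus: "total_surplus_R mu Phi = FF \<nu> Phi"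
  proof -
    define g where "g x y = real (\<nu> x y + \<nu> y x) * Phi x y / 2" for x y
    have inner: "(\<Sum>y\<in>UNIV - {x}. real (mu x y) * Phi x y / 2) = (\<Sum>y\<in>UNIV. g x y) - real (\<nu> x x) * Phi x x" for x
    proof -
      have "(\<Sum>y\<in>UNIV - {x}. real (mu x y) * Phi x y / 2) = (\<Sum>y\<in>UNIV - {x}. g x y)"
        by (rule sum.cong) (auto simp: mu_def g_def)
      moreover have "(\<Sum>y\<in>UNIV. g x y) = g x x + (\<Sum>y\<in>UNIV - {x}. g x y)"
        by (subst sum.remove[of UNIV x]) auto
      moreover have "g x x = real (\<nu> x x) * Phi x x" by (simp add: g_def)
      ultimately show ?thesis by simp
    qed
    have "total_surplus_R mu Phi = (\<Sum>x\<in>UNIV. real (\<nu> x x) * Phi x x) + (\<Sum>x\<in>UNIV. (\<Sum>y\<in>UNIV. g x y) - real (\<nu> x x) * Phi x x)"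
      unfolding total_surplus_R_def inner by (simp add: mu_def)
    also have "\<dots> = (\<Sum>x\<in>UNIV. \<Sum>y\<in>UNIV. g x y)"
      by (simp add: sum_subtractf)
    also have "\<dots> = (FF \<nu> Phi + (\<Sum>x\<in>UNIV. \<Sum>y\<in>UNIV. real (\<nu> y x) * Phi x y)) / 2"
      unfolding g_def FF_def by (simp add: sum.distrib sum_divide_distrib[symmetric] algebra_simps)
    also have "(\<Sum>x\<in>UNIV. \<Sum>y\<in>UNIV. real (\<nu> y x) * Phi x y) = (\<Sum>y\<in>UNIV. \<Sum>x\<in>UNIV. real (\<nu> y x) * Phi y x)"
      by (subst sum.swap) (simp add: assms(2))
    also have "\<dots> = FF \<nu> Phi" unfolding FF_def ..
    finally show ?thesis by simp
  qed
  have "stable_outcome_R n Phi mu uR"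
    unfolding stable_outcome_R_def
  proof (intro conjI allI)
    show "feasible_roommate n mu" by (rule feas)
    show "(\<Sum>x\<in>UNIV. real (n x) * uR x) = total_surplus_R mu Phi"
      unfolding surplus d(5) uR_def nm by (intro sum.cong refl) (simp add: field_simps)
  next
    fix x show "0 \<le> uR x" using d(2,3) by (simp add: uR_def add_nonneg_nonneg)
  next
    fix x y
    show "Phi x y \<le> uR x + uR y"
    proof -
      have "Phi x y \<le> u x + v y" "Phi y x \<le> u y + v x" using d(4) by blast+
      moreover have "Phi y x = Phi x y" using assms(2) by blast
      ultimately show ?thesis unfolding uR_def by (simp add: field_simps)
    qed
  qed
  then show ?thesis unfolding stable_roommate_matching_def by blast
qed

end
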